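(* Suppose that $\int_{[0,1]} |\log(1-p)|\,\Lambda(dp)<\infty$. Then the sequence $(L_n)_{n\ge 1}$ is tight.
   Context: Let $\Lambda$ be a nonzero finite measure on $[0,1]$. For $n\ge 1$, the $\Lambda$-coalescent started with $n$ blocks, $(\Pi_n(t))_{t\ge0}$, is the continuous-time Markov chain on partitions of $\{1,\dots,n\}$, started from the partition into singletons, in which, whenever there are $b$ blocks, each particular collection of $k\ge2$ blocks merges into a single block at rate $\lambda_{b,k}=\int_{[0,1]}p^{k-2}(1-p)^{b-k}\,\Lambda(dp)$, and no other transitions occur. Let $N_n(t)$ be the number of blocks of $\Pi_n(t)$, $T_n=\inf\{t\ge0:N_n(t)=1\}$ the time of the last merger, and $L_n=N_n(T_n-)$ the number of blocks involved in the last merger. *)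

theory Defs
  imports "HOL-Probability.Probability"
begin

text \<open>Lambda-coalescent: merger rate of a particular collection of k blocks when
  there are b blocks.\<close>
definition lambda_rate :: "real measure \<Rightarrow> nat \<Rightarrow> nat \<Rightarrow> real" where
  "lambda_rate \<Lambda> b k = (LINT p:{0..1}|\<Lambda>. p ^ (k - 2) * (1 - p) ^ (b - k))"

definition total_rate :: "real measure \<Rightarrow> nat \<Rightarrow> real" where
  "total_rate \<Lambda> b = (\<Sum>k\<in>{2..b}. real (b choose k) * lambda_rate \<Lambda> b k)"

text \<open>Embedded jump chain: from partition P (a set of blocks), the collection S of
  blocks that merges at the next jump is chosen with probability proportional to its rate.\<close>
definition merge_choice :: "real measure \<Rightarrow> nat set set \<Rightarrow> nat set set pmf" where
  "merge_choice \<Lambda> P = embed_pmf (\<lambda>S. if S \<subseteq> P \<and> 2 \<le> card S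
      then lambda_rate \<Lambda> (card P) (card S) / total_rate \<Lambda> (card P) else 0)"

text \<open>Law of the number of blocks involved in the last merger, for the coalescent
  started from partition P (fuel = number of remaining jumps allowed; card P suffices).\<close>
fun last_merger_aux :: "real measure \<Rightarrow> nat \<Rightarrow> nat set set \<Rightarrow> nat pmf" where
  "last_merger_aux \<Lambda> 0 P = return_pmf (card P)"
| "last_merger_aux \<Lambda> (Suc f) P =
     (if card P \<le> 1 then return_pmf (card P)
      else bind_pmf (merge_choice \<Lambda> P)
             (\<lambda>S. if S = P then return_pmf (card P)
                  else last_merger_aux \<Lambda> f ((P - S) \<union> {\<Union>S})))"

definition L_law :: "real measure \<Rightarrow> nat \<Rightarrow> nat pmf" where
  "L_law \<Lambda> n = last_merger_aux \<Lambda> n {{i} | i. i \<in> {1..n}}"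

end

theory Submission
  imports Defs
begin



lemma binom_mean:
  fixes p q :: real
  shows "(\<Sum>k\<le>n. real k * real (n choose k) * p^k * q^(n-k)) = real n * p * (p+q)^(n-1)"
proof (cases n)
  case 0 then show ?thesis by simp
next
  case (Suc m)
  have "(\<Sum>k\<le>Suc m. real k * real (Suc m choose k) * p^k * q^(Suc m-k))
      = (\<Sum>j\<le>m. real (Suc j) * real (Suc m choose Suc j) * p^(Suc j) * q^(Suc m - Suc j))"
    by (subst sum.atMost_Suc_shift) simp
  also have "\<dots> = (\<Sum>j\<le>m. real (Suc m) * p * (real (m choose j) * p^j * q^(m - j)))"
  proof (rule sum.cong[OF refl])
    fix j assume "j \<in> {..m}"
    have "real (Suc j) * real (Suc m choose Suc j) = real (Suc m) * real (m choose j)"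
      by (metis Suc_times_binomial of_nat_mult)
    then show "real (Suc j) * real (Suc m choose Suc j) * p^(Suc j) * q^(Suc m - Suc j)
      = real (Suc m) * p * (real (m choose j) * p^j * q^(m - j))"
      by (simp add: algebra_simps)
  qed
  also have "\<dots> = real (Suc m) * p * (p+q)^m"
    by (simp add: sum_distrib_left[symmetric] binomial_ring)
  finally show ?thesis using Suc by simp
qed

lemma h_identity:
  fixes p :: real
  assumes "b \<ge> 2"
  shows "(\<Sum>k\<in>{2..b}. real (b choose k) * (real k - 1) * p^k * (1-p)^(b-k)) = real b * p - 1 + (1-p)^b"
proof -
  let ?f = "\<lambda>k. real (b choose k) * (real k - 1) * p^k * (1-p)^(b-k)"
  have split: "{..b} = {0,1} \<union> {2..b}" using assms by auto
  have "(\<Sum>k\<le>b. ?f k) = ?f 0 + ?f 1 + (\<Sum>k\<in>{2..b}. ?f k)"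
    by (subst split, subst sum.union_disjoint) auto
  moreover have "(\<Sum>k\<le>b. ?f k) = (\<Sum>k\<le>b. real k * real (b choose k) * p^k * (1-p)^(b-k))
       - (\<Sum>k\<le>b. real (b choose k) * p^k * (1-p)^(b-k))"
    by (simp add: sum_subtractf[symmetric] algebra_simps)
  moreover have "(\<Sum>k\<le>b. real (b choose k) * p^k * (1-p)^(b-k)) = 1"
    using binomial_ring[of p "1-p" b] by simp
  moreover have "(\<Sum>k\<le>b. real k * real (b choose k) * p^k * (1-p)^(b-k)) = real b * p"
    using binom_mean[of b p "1-p"] by simp
  ultimately show ?thesis by simp
qed

lemma h_lower:
  fixes p :: real
  assumes "0 \<le> p" "p \<le> 1" "b \<ge> 1"
  shows "real b * p - 1 + (1-p)^b \<ge> (real b - 1) * p^2"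
  using assms(3)
proof (induction b rule: dec_induct)
  case base then show ?case by simp
next
  case (step n)
  have "(1-p)^n \<le> (1-p)^1" using assms step by (intro power_decreasing) auto
  then have "p * (1-p)^n \<le> p * (1-p)" using assms by (intro mult_left_mono) auto
  then show ?case using step by (simp add: algebra_simps power2_eq_square)
qed

definition gfun :: "nat \<Rightarrow> real \<Rightarrow> real" where
  "gfun b p = (\<Sum>k\<in>{2..b}. real (b choose k) * (real k - 1) * (p^(k-2) * (1-p)^(b-k)))"

lemma gfun_lower:
  fixes p :: real
  assumes "0 \<le> p" "p \<le> 1" "b \<ge> 2"
  shows "gfun b p \<ge> real b - 1"
proof (cases "p = 0")
  case True
  have "gfun b p = (\<Sum>k\<in>{2..b}. if k = 2 then real (b choose 2) else 0)"
    unfolding gfun_def True by (intro sum.cong refl) auto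
  also have "\<dots> = real (b choose 2)" using assms by simp
  finally have "gfun b p = real (b choose 2)" .
  moreover have "real (b choose 2) \<ge> real b - 1"
  proof -
    have "b - 1 = (2*(b-1)) div 2" by simp
    also have "\<dots> \<le> (b*(b-1)) div 2" using assms by (intro div_le_mono) simp
    finally have "b choose 2 \<ge> b - 1" by (simp add: choose_two)
    then show ?thesis using assms by linarith
  qed
  ultimately show ?thesis by simp
next
  case False
  then have pp: "p > 0" using assms by simp
  have "p^2 * gfun b p = (\<Sum>k\<in>{2..b}. real (b choose k) * (real k - 1) * p^k * (1-p)^(b-k))"
    unfolding gfun_def sum_distrib_left
  proof (rule sum.cong[OF refl])
    fix k assume "k \<in> {2..b}"
    then have "2 + (k-2) = k" by presburger
    then have "p^2 * p^(k-2) = p^k" by (metis power_add)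
    then show "p^2 * (real (b choose k) * (real k - 1) * (p^(k-2) * (1-p)^(b-k)))
       = real (b choose k) * (real k - 1) * p^k * (1-p)^(b-k)"
      by (metis (no_types, lifting) mult.assoc mult.left_commute)
  qed
  also have "\<dots> = real b * p - 1 + (1-p)^b" using h_identity assms by simp
  also have "\<dots> \<ge> (real b - 1) * p^2" using h_lower assms by simp
  finally have "p^2 * (real b - 1) \<le> p^2 * gfun b p" by (simp add: mult.commute)
  then show ?thesis using pp by simp
qed


context
  fixes \<Lambda> :: "real measure"
  assumes fin: "finite_measure \<Lambda>" and sts: "sets \<Lambda> = sets borel"
begin

lemma meas_I:
  fixes f :: "real \<Rightarrow> real"
  assumes "f \<in> borel_measurable borel"
  shows "(\<lambda>p. indicator {0..1} p * f p) \<in> borel_measurable \<Lambda>"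
proof -
  have [measurable]: "f \<in> borel_measurable borel" by fact
  show ?thesis unfolding measurable_cong_sets[OF sts refl] by measurable
qed

lemma integrable_I:
  fixes B :: real and f :: "real \<Rightarrow> real"
  assumes "f \<in> borel_measurable borel" "\<And>p. p \<in> {0..1} \<Longrightarrow> \<bar>f p\<bar> \<le> B"
  shows "integrable \<Lambda> (\<lambda>p. indicator {0..1} p * f p)"
proof (rule finite_measure.integrable_const_bound[OF fin, where B="\<bar>B\<bar>"])
  show "AE x in \<Lambda>. norm (indicator {0..1} x * f x) \<le> \<bar>B\<bar>"
    using assms(2) by (intro AE_I2) (auto simp: indicator_def intro: order_trans[OF _ abs_ge_self])
  show "(\<lambda>p. indicator {0..1} p * f p) \<in> borel_measurable \<Lambda>" using meas_I[OF assms(1)] .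
qed

lemma lambda_rate_eq:
  "lambda_rate \<Lambda> b k = (\<integral>p. indicator {0..1} p * (p^(k-2) * (1-p)^(b-k)) \<partial>\<Lambda>)"
  unfolding lambda_rate_def set_lebesgue_integral_def by simp

lemma integrable_rate: "integrable \<Lambda> (\<lambda>p. indicator {0..1} p * (p^(k-2) * (1-p)^(b-k)))"
proof (rule integrable_I[where B=1])
  show "(\<lambda>p::real. p^(k-2) * (1-p)^(b-k)) \<in> borel_measurable borel" by measurable
  fix p :: real assume "p \<in> {0..1}"
  then show "\<bar>p^(k-2) * (1-p)^(b-k)\<bar> \<le> 1"
    by (auto simp: abs_mult intro!: mult_le_one power_le_one)
qed

lemma lambda_rate_nonneg: "lambda_rate \<Lambda> b k \<ge> 0"
  unfolding lambda_rate_eq by (intro integral_nonneg_AE AE_I2) (auto simp: indicator_def)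

lemma lambda_rate_diag_mono:
  assumes "2 \<le> j" "j \<le> b"
  shows "lambda_rate \<Lambda> b b \<le> lambda_rate \<Lambda> j j"
  unfolding lambda_rate_eq
proof (intro integral_mono integrable_rate)
  fix p :: real
  show "indicator {0..1} p * (p^(b-2) * (1-p)^(b-b)) \<le> indicator {0..1} p * (p^(j-2) * (1-p)^(j-j))"
    using assms by (auto simp: indicator_def intro!: power_decreasing)
qed

lemma gamma_lower:
  assumes "b \<ge> 2"
  shows "(\<Sum>k\<in>{2..b}. real (b choose k) * (real k - 1) * lambda_rate \<Lambda> b k) \<ge> (real b - 1) * measure \<Lambda> {0..1}"
proof -
  have "(\<Sum>k\<in>{2..b}. real (b choose k) * (real k - 1) * lambda_rate \<Lambda> b k)
      = (\<Sum>k\<in>{2..b}. (\<integral>p. real (b choose k) * (real k - 1) * (indicator {0..1} p * (p^(k-2) * (1-p)^(b-k))) \<partial>\<Lambda>))"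
    unfolding lambda_rate_eq by (intro sum.cong refl) simp
  also have "\<dots> = (\<integral>p. (\<Sum>k\<in>{2..b}. real (b choose k) * (real k - 1) * (indicator {0..1} p * (p^(k-2) * (1-p)^(b-k)))) \<partial>\<Lambda>)"
    by (rule Bochner_Integration.integral_sum[symmetric]) (auto intro!: integrable_mult_right integrable_rate)
  also have "\<dots> = (\<integral>p. indicator {0..1} p * gfun b p \<partial>\<Lambda>)"
    unfolding gfun_def sum_distrib_left by (intro Bochner_Integration.integral_cong refl sum.cong) (simp_all add: algebra_simps)
  also have "\<dots> \<ge> (\<integral>p. indicator {0..1} p * (real b - 1) \<partial>\<Lambda>)"
  proof (intro integral_mono)
    show "integrable \<Lambda> (\<lambda>p. indicator {0..1} p * (real b - 1))"
      by (rule integrable_I[where B="real b"]) (use assms in auto)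
    have eq: "(\<lambda>p. indicator {0..1} p * gfun b p) = (\<lambda>p. (\<Sum>k\<in>{2..b}. real (b choose k) * (real k - 1) * (indicator {0..1} p * (p^(k-2) * (1-p)^(b-k)))))"
      unfolding gfun_def sum_distrib_left by (intro ext sum.cong refl) (simp add: algebra_simps)
    show "integrable \<Lambda> (\<lambda>p. indicator {0..1} p * gfun b p)"
      unfolding eq by (intro Bochner_Integration.integrable_sum integrable_mult_right integrable_rate)
    fix p :: real show "indicator {0..1} p * (real b - 1) \<le> indicator {0..1} p * gfun b p"
      using gfun_lower[of p b] assms by (auto simp: indicator_def)
  qed
  also have "(\<integral>p. indicator {0..1} p * (real b - 1) \<partial>\<Lambda>) = (real b - 1) * measure \<Lambda> {0..1}"
  proof -
    have "{0..1::real} \<in> sets \<Lambda>" using sts by simp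
    moreover have "emeasure \<Lambda> {0..1} < \<infinity>" using fin finite_measure.emeasure_finite by (auto simp: top.not_eq_extremum)
    ultimately show ?thesis by (simp add: mult.commute)
  qed
  finally show ?thesis .
qed

end



lemma group_sum:
  fixes g :: "nat \<Rightarrow> real"
  assumes "finite P"
  shows "(\<Sum>S\<in>{S. S \<subseteq> P \<and> 2 \<le> card S}. g (card S)) = (\<Sum>k\<in>{2..card P}. real (card P choose k) * g k)"
proof -
  have eq: "{S. S \<subseteq> P \<and> 2 \<le> card S} = (\<Union>k\<in>{2..card P}. {S. S \<subseteq> P \<and> card S = k})"
    using assms by (auto intro: card_mono)
  have fin: "\<forall>k\<in>{2..card P}. finite {S. S \<subseteq> P \<and> card S = k}"
    using assms by auto
  have "(\<Sum>S\<in>{S. S \<subseteq> P \<and> 2 \<le> card S}. g (card S))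
      = (\<Sum>k\<in>{2..card P}. (\<Sum>S\<in>{S. S \<subseteq> P \<and> card S = k}. g (card S)))"
    unfolding eq by (rule sum.UNION_disjoint[OF _ fin]) auto
  also have "\<dots> = (\<Sum>k\<in>{2..card P}. real (card P choose k) * g k)"
  proof (rule sum.cong[OF refl])
    fix k
    have "(\<Sum>S\<in>{S. S \<subseteq> P \<and> card S = k}. g (card S)) = (\<Sum>S\<in>{S. S \<subseteq> P \<and> card S = k}. g k)"
      by (rule sum.cong) auto
    also have "\<dots> = real (card {S. S \<subseteq> P \<and> card S = k}) * g k" by simp
    also have "\<dots> = real (card P choose k) * g k" using n_subsets[OF assms] by simp
    finally show "(\<Sum>S\<in>{S. S \<subseteq> P \<and> card S = k}. g (card S)) = real (card P choose k) * g k" .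
  qed
  finally show ?thesis .
qed

lemma prob_bind_finite:
  assumes "finite A" "set_pmf M \<subseteq> A"
  shows "measure_pmf.prob (bind_pmf M N) X = (\<Sum>x\<in>A. pmf M x * measure_pmf.prob (N x) X)"
proof -
  have fin: "finite (set_pmf M)" using assms finite_subset by blast
  have "ennreal (measure_pmf.prob (bind_pmf M N) X) = emeasure (bind_pmf M N) X"
    by (simp add: measure_pmf.emeasure_eq_measure)
  also have "\<dots> = (\<integral>\<^sup>+x. emeasure (N x) X \<partial>M)"
    by (rule emeasure_bind_pmf)
  also have "\<dots> = (\<integral>\<^sup>+x. ennreal (measure_pmf.prob (N x) X) \<partial>M)"
    by (simp add: measure_pmf.emeasure_eq_measure)
  also have "\<dots> = ennreal (\<integral>x. measure_pmf.prob (N x) X \<partial>M)"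
    by (intro nn_integral_eq_integral integrable_measure_pmf_finite fin AE_I2) auto
  also have "(\<integral>x. measure_pmf.prob (N x) X \<partial>M) = (\<Sum>x\<in>A. measure_pmf.prob (N x) X * pmf M x)"
    using assms by (intro integral_measure_pmf_real) (auto)
  finally show ?thesis
    by (subst (asm) ennreal_inj) (auto intro!: sum_nonneg simp: mult.commute)
qed

context
  fixes \<Lambda> :: "real measure"
  assumes fin: "finite_measure \<Lambda>" and sts: "sets \<Lambda> = sets borel"
    and cpos: "measure \<Lambda> {0..1} > 0"
begin

lemma total_rate_pos:
  assumes "b \<ge> 2"
  shows "total_rate \<Lambda> b \<ge> measure \<Lambda> {0..1}"
proof -
  have "(real b - 1) * measure \<Lambda> {0..1} \<le> (\<Sum>k\<in>{2..b}. real (b choose k) * (real k - 1) * lambda_rate \<Lambda> b k)"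
    using gamma_lower[OF fin sts assms] .
  also have "\<dots> \<le> (\<Sum>k\<in>{2..b}. (real b - 1) * (real (b choose k) * lambda_rate \<Lambda> b k))"
  proof (rule sum_mono)
    fix k assume "k \<in> {2..b}"
    then show "real (b choose k) * (real k - 1) * lambda_rate \<Lambda> b k \<le> (real b - 1) * (real (b choose k) * lambda_rate \<Lambda> b k)"
      using lambda_rate_nonneg[OF fin sts, of b k]
      by (simp add: algebra_simps mult_right_mono mult_left_mono)
  qed
  also have "\<dots> = (real b - 1) * total_rate \<Lambda> b"
    unfolding total_rate_def sum_distrib_left ..
  finally show ?thesis using assms by simp
qed

definition wt :: "nat set set \<Rightarrow> nat set set \<Rightarrow> real" where
  "wt P S = (if S \<subseteq> P \<and> 2 \<le> card S
      then lambda_rate \<Lambda> (card P) (card S) / total_rate \<Lambda> (card P) else 0)"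

lemma wt_sum:
  assumes "finite P" "card P \<ge> 2"
  shows "(\<Sum>S\<in>{S. S \<subseteq> P \<and> 2 \<le> card S}. wt P S) = 1"
proof -
  have "(\<Sum>S\<in>{S. S \<subseteq> P \<and> 2 \<le> card S}. wt P S)
      = (\<Sum>S\<in>{S. S \<subseteq> P \<and> 2 \<le> card S}. lambda_rate \<Lambda> (card P) (card S) / total_rate \<Lambda> (card P))"
    unfolding wt_def by (rule sum.cong) auto
  also have "\<dots> = (\<Sum>k\<in>{2..card P}. real (card P choose k) * (lambda_rate \<Lambda> (card P) k / total_rate \<Lambda> (card P)))"
    using group_sum[OF assms(1), of "\<lambda>k. lambda_rate \<Lambda> (card P) k / total_rate \<Lambda> (card P)"] .
  also have "\<dots> = total_rate \<Lambda> (card P) / total_rate \<Lambda> (card P)"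
    unfolding total_rate_def sum_divide_distrib by (simp add: algebra_simps)
  also have "\<dots> = 1" using total_rate_pos[OF assms(2)] cpos by simp
  finally show ?thesis .
qed

lemma pmf_merge:
  assumes "finite P" "card P \<ge> 2"
  shows "pmf (merge_choice \<Lambda> P) S = wt P S"
proof -
  have nn: "\<And>S. 0 \<le> wt P S"
    unfolding wt_def using lambda_rate_nonneg[OF fin sts] total_rate_pos[OF assms(2)] cpos
    by (auto intro!: divide_nonneg_pos)
  have "(\<integral>\<^sup>+S. ennreal (wt P S) \<partial>count_space UNIV) = (\<Sum>S\<in>{S. S \<subseteq> P \<and> 2 \<le> card S}. ennreal (wt P S))"
    using assms by (intro nn_integral_count_space') (auto simp: wt_def)
  also have "\<dots> = ennreal (\<Sum>S\<in>{S. S \<subseteq> P \<and> 2 \<le> card S}. wt P S)"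
    using nn by (simp add: sum_ennreal)
  also have "\<dots> = 1" using wt_sum[OF assms] by simp
  finally have "(\<integral>\<^sup>+S. ennreal (wt P S) \<partial>count_space UNIV) = 1" .
  then show ?thesis
    unfolding merge_choice_def using pmf_embed_pmf[of "wt P", OF nn] by (simp add: wt_def[abs_def])
qed

end


context
  fixes \<Lambda> :: "real measure"
  assumes fin: "finite_measure \<Lambda>" and sts: "sets \<Lambda> = sets borel"
    and cpos: "measure \<Lambda> {0..1} > 0"
begin

definition aa :: "nat \<Rightarrow> real" where
  "aa k = (if 2 \<le> k then 2 * lambda_rate \<Lambda> k k / (real (k-1) * measure \<Lambda> {0..1}) else 0)"

definition FF :: "nat \<Rightarrow> nat \<Rightarrow> real" where
  "FF K m = (\<Sum>k\<in>{K<..m}. aa k)"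

lemma aa_nonneg: "aa k \<ge> 0"
  unfolding aa_def using lambda_rate_nonneg[OF fin sts] cpos by auto

lemma aa_mono:
  assumes "2 \<le> j" "j \<le> b"
  shows "aa b \<le> aa j"
proof -
  have l: "lambda_rate \<Lambda> b b \<le> lambda_rate \<Lambda> j j" using lambda_rate_diag_mono[OF fin sts assms] .
  have l0: "0 \<le> lambda_rate \<Lambda> b b" using lambda_rate_nonneg[OF fin sts] .
  have d: "real (j-1) * measure \<Lambda> {0..1} \<le> real (b-1) * measure \<Lambda> {0..1}"
    using assms cpos by (intro mult_right_mono) auto
  have dp: "0 < real (j-1) * measure \<Lambda> {0..1}" using assms cpos by simp
  have "2 * lambda_rate \<Lambda> b b / (real (b-1) * measure \<Lambda> {0..1}) \<le> 2 * lambda_rate \<Lambda> b b / (real (j-1) * measure \<Lambda> {0..1})"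
    using d dp l0 assms cpos by (intro divide_left_mono) (auto intro!: mult_pos_pos)
  also have "\<dots> \<le> 2 * lambda_rate \<Lambda> j j / (real (j-1) * measure \<Lambda> {0..1})"
    using l dp by (intro divide_right_mono) auto
  finally show ?thesis unfolding aa_def using assms by simp
qed

lemma FF_nonneg: "FF K m \<ge> 0"
  unfolding FF_def by (intro sum_nonneg aa_nonneg)

lemma FF_mono: "m \<le> m' \<Longrightarrow> FF K m \<le> FF K m'"
  unfolding FF_def by (intro sum_mono2 aa_nonneg) auto

lemma FF_one: "1 \<le> K \<Longrightarrow> FF K 1 = 0"
  unfolding FF_def by simp

lemma FF_drop:
  assumes "1 \<le> K" "2 * K < b" "1 \<le> m" "m < b"
  shows "FF K m + real (b - m) * aa b / 2 \<le> FF K b"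
proof -
  let ?x = "max K m"
  have un: "{K<..b} = {K<..m} \<union> {?x<..b}" using assms by auto
  have dj: "{K<..m} \<inter> {?x<..b} = {}" by auto
  have "FF K b = FF K m + (\<Sum>k\<in>{?x<..b}. aa k)"
    unfolding FF_def un by (rule sum.union_disjoint) (auto simp: dj)
  moreover have "(\<Sum>k\<in>{?x<..b}. aa k) \<ge> (\<Sum>k\<in>{?x<..b}. aa b)"
    using assms by (intro sum_mono aa_mono) auto
  moreover have "(\<Sum>k\<in>{?x<..b}. aa b) = real (b - ?x) * aa b" by simp
  moreover have "real (b - ?x) * aa b \<ge> real (b - m) * aa b / 2"
  proof -
    have h: "real (b - m) \<le> 2 * real (b - ?x)" using assms by auto
    show ?thesis using mult_right_mono[OF h aa_nonneg[of b]] by (simp add: algebra_simps)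
  qed
  ultimately show ?thesis by linarith
qed

definition UU :: "nat \<Rightarrow> nat \<Rightarrow> nat \<Rightarrow> real" where
  "UU K b k = (if k = b then (if 2 * K < b then 1 else 0) else FF K (b - k + 1))"

lemma step_ineq:
  assumes K: "1 \<le> K" and b: "2 \<le> b"
  shows "(\<Sum>k\<in>{2..b}. real (b choose k) * (lambda_rate \<Lambda> b k / total_rate \<Lambda> b * UU K b k)) \<le> FF K b"
proof -
  define T where "T = total_rate \<Lambda> b"
  define r where "r k = real (b choose k) * lambda_rate \<Lambda> b k" for k
  have Tpos: "T > 0" using total_rate_pos[OF fin sts cpos b] cpos unfolding T_def by simp
  have T_eq: "T = (\<Sum>k\<in>{2..b}. r k)" unfolding T_def r_def total_rate_def ..
  have r_nn: "r k \<ge> 0" for k unfolding r_def using lambda_rate_nonneg[OF fin sts] by simp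
  have lhs: "(\<Sum>k\<in>{2..b}. real (b choose k) * (lambda_rate \<Lambda> b k / total_rate \<Lambda> b * UU K b k))
      = (\<Sum>k\<in>{2..b}. r k * UU K b k) / T"
    unfolding sum_divide_distrib T_def r_def by (intro sum.cong refl) (simp add: algebra_simps)
  have main: "(\<Sum>k\<in>{2..b}. r k * UU K b k) \<le> T * FF K b"
  proof (cases "2 * K < b")
    case False
    have "(\<Sum>k\<in>{2..b}. r k * UU K b k) \<le> (\<Sum>k\<in>{2..b}. r k * FF K b)"
    proof (intro sum_mono mult_left_mono r_nn)
      fix k assume "k \<in> {2..b}"
      then show "UU K b k \<le> FF K b" unfolding UU_def using False FF_nonneg
        by (auto intro!: FF_mono)
    qed
    also have "\<dots> = T * FF K b" unfolding T_eq sum_distrib_right ..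
    finally show ?thesis .
  next
    case True
    define \<alpha> where "\<alpha> = aa b / 2"
    have U_le: "UU K b k \<le> FF K b - (real k - 1) * \<alpha> + (if k = b then 1 else 0)" if k: "k \<in> {2..b}" for k
    proof (cases "k = b")
      case True2: True
      have "FF K 1 + real (b - 1) * aa b / 2 \<le> FF K b" using FF_drop[OF K \<open>2*K<b\<close>, of 1] b by simp
      then show ?thesis unfolding UU_def \<alpha>_def using True2 True FF_one[OF K] b by (simp add: of_nat_diff)
    next
      case False
      have "FF K (b - k + 1) + real (b - (b - k + 1)) * aa b / 2 \<le> FF K b"
        using FF_drop[OF K True, of "b - k + 1"] k False by auto
      moreover have "real (b - (b - k + 1)) = real k - 1" using k False by (simp add: of_nat_diff)
      ultimately show ?thesis unfolding UU_def \<alpha>_def using False by simp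
    qed
    have "(\<Sum>k\<in>{2..b}. r k * UU K b k)
        \<le> (\<Sum>k\<in>{2..b}. r k * FF K b - \<alpha> * (real (b choose k) * (real k - 1) * lambda_rate \<Lambda> b k) + (if k = b then r k else 0))"
    proof (rule sum_mono)
      fix k assume k: "k \<in> {2..b}"
      have "r k * UU K b k \<le> r k * (FF K b - (real k - 1) * \<alpha> + (if k = b then 1 else 0))"
        using U_le[OF k] r_nn by (intro mult_left_mono) auto
      moreover have "r k * (FF K b - (real k - 1) * \<alpha> + (if k = b then 1 else 0)) = r k * FF K b - \<alpha> * (real (b choose k) * (real k - 1) * lambda_rate \<Lambda> b k) + (if k = b then r k else 0)"
        unfolding r_def by (cases "k = b") (simp_all add: algebra_simps)
      ultimately show "r k * UU K b k \<le> r k * FF K b - \<alpha> * (real (b choose k) * (real k - 1) * lambda_rate \<Lambda> b k) + (if k = b then r k else 0)"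
        by simp
    qed
    also have "\<dots> = T * FF K b - \<alpha> * (\<Sum>k\<in>{2..b}. real (b choose k) * (real k - 1) * lambda_rate \<Lambda> b k) + r b"
      using b unfolding T_eq by (simp add: sum.distrib sum_subtractf sum_distrib_left sum_distrib_right)
    also have "\<dots> \<le> T * FF K b"
    proof -
      have g: "(\<Sum>k\<in>{2..b}. real (b choose k) * (real k - 1) * lambda_rate \<Lambda> b k) \<ge> (real b - 1) * measure \<Lambda> {0..1}"
        using gamma_lower[OF fin sts b] .
      have an: "\<alpha> \<ge> 0" unfolding \<alpha>_def using aa_nonneg by simp
      have "\<alpha> * ((real b - 1) * measure \<Lambda> {0..1}) = lambda_rate \<Lambda> b b"
        unfolding \<alpha>_def aa_def using b cpos by (simp add: of_nat_diff)
      moreover have "r b = lambda_rate \<Lambda> b b" unfolding r_def by simp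
      ultimately have "r b \<le> \<alpha> * (\<Sum>k\<in>{2..b}. real (b choose k) * (real k - 1) * lambda_rate \<Lambda> b k)"
        using mult_left_mono[OF g an] by simp
      then show ?thesis by simp
    qed
    finally show ?thesis .
  qed
  show ?thesis unfolding lhs using main Tpos by (simp add: pos_divide_le_eq mult.commute)
qed

end


context
  fixes \<Lambda> :: "real measure"
  assumes fin: "finite_measure \<Lambda>" and sts: "sets \<Lambda> = sets borel"
    and cpos: "measure \<Lambda> {0..1} > 0"
begin

lemma main_ind:
  assumes K: "1 \<le> K"
  shows "finite P \<Longrightarrow> card P \<le> f \<Longrightarrow>
    measure_pmf.prob (last_merger_aux \<Lambda> f P) {2*K<..} \<le> FF \<Lambda> K (card P)"
proof (induction f arbitrary: P)
  case 0
  then show ?case using FF_nonneg[OF fin sts cpos] by simp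
next
  case (Suc f)
  show ?case
  proof (cases "card P \<le> 1")
    case True
    then show ?thesis using FF_nonneg[OF fin sts cpos] K by (simp add: indicator_def)
  next
    case False
    define b where "b = card P"
    have b: "2 \<le> b" using False b_def by simp
    define A where "A = {S. S \<subseteq> P \<and> 2 \<le> card S}"
    have finA: "finite A" unfolding A_def using Suc.prems(1) by auto
    have supp: "set_pmf (merge_choice \<Lambda> P) \<subseteq> A"
    proof
      fix S assume "S \<in> set_pmf (merge_choice \<Lambda> P)"
      then have "pmf (merge_choice \<Lambda> P) S \<noteq> 0" by (simp add: set_pmf_iff)
      then have "wt \<Lambda> P S \<noteq> 0" unfolding pmf_merge[OF fin sts cpos Suc.prems(1) b[unfolded b_def]] .
      then show "S \<in> A" unfolding A_def wt_def[OF fin sts cpos] by (auto split: if_splits)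
    qed
    define N where "N = (\<lambda>S. if S = P then return_pmf (card P)
                  else last_merger_aux \<Lambda> f ((P - S) \<union> {\<Union>S}))"
    have eq: "last_merger_aux \<Lambda> (Suc f) P = bind_pmf (merge_choice \<Lambda> P) N"
      using False unfolding N_def by simp
    have "measure_pmf.prob (last_merger_aux \<Lambda> (Suc f) P) {2*K<..}
        = (\<Sum>S\<in>A. pmf (merge_choice \<Lambda> P) S * measure_pmf.prob (N S) {2*K<..})"
      unfolding eq by (rule prob_bind_finite[OF finA supp])
    also have "\<dots> \<le> (\<Sum>S\<in>A. wt \<Lambda> P S * UU \<Lambda> K b (card S))"
    proof (rule sum_mono)
      fix S assume S: "S \<in> A"
      have pm: "pmf (merge_choice \<Lambda> P) S = wt \<Lambda> P S"
        using pmf_merge[OF fin sts cpos Suc.prems(1) b[unfolded b_def]] .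
      have V: "measure_pmf.prob (N S) {2*K<..} \<le> UU \<Lambda> K b (card S)"
      proof (cases "S = P")
        case True
        then show ?thesis unfolding N_def UU_def[OF fin sts cpos] b_def by (simp add: indicator_def)
      next
        case False
        have SP: "S \<subseteq> P" "2 \<le> card S" using S unfolding A_def by auto
        have lt: "card S < b" unfolding b_def using SP False Suc.prems(1)
          by (intro psubset_card_mono) auto
        define P' where "P' = (P - S) \<union> {\<Union>S}"
        have finP': "finite P'" unfolding P'_def using Suc.prems(1) by auto
        have cP': "card P' \<le> b - card S + 1"
        proof -
          have "card P' \<le> Suc (card (P - S))" unfolding P'_def
            using Suc.prems(1) by (simp add: card_insert_if)
          also have "card (P - S) = b - card S" unfolding b_def
            using SP Suc.prems(1) by (simp add: card_Diff_subset finite_subset)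
          finally show ?thesis by simp
        qed
        have "card P' \<le> f" using cP' Suc.prems(2) SP lt unfolding b_def by linarith
        then have "measure_pmf.prob (last_merger_aux \<Lambda> f P') {2*K<..} \<le> FF \<Lambda> K (card P')"
          using Suc.IH finP' by blast
        also have "\<dots> \<le> FF \<Lambda> K (b - card S + 1)" using cP' by (rule FF_mono[OF fin sts cpos])
        finally show ?thesis unfolding N_def UU_def[OF fin sts cpos] using False lt P'_def by simp
      qed
      have "0 \<le> wt \<Lambda> P S" using pm pmf_nonneg by metis
      then show "pmf (merge_choice \<Lambda> P) S * measure_pmf.prob (N S) {2*K<..} \<le> wt \<Lambda> P S * UU \<Lambda> K b (card S)"
        unfolding pm using mult_left_mono[OF V] by blast
    qed
    also have "\<dots> = (\<Sum>S\<in>A. lambda_rate \<Lambda> b (card S) / total_rate \<Lambda> b * UU \<Lambda> K b (card S))"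
      unfolding wt_def[OF fin sts cpos] A_def b_def by (intro sum.cong refl) auto
    also have "\<dots> = (\<Sum>k\<in>{2..b}. real (b choose k) * (lambda_rate \<Lambda> b k / total_rate \<Lambda> b * UU \<Lambda> K b k))"
      unfolding A_def b_def by (rule group_sum[OF Suc.prems(1)])
    also have "\<dots> \<le> FF \<Lambda> K b" by (rule step_ineq[OF fin sts cpos K b])
    finally show ?thesis unfolding b_def .
  qed
qed

end


lemma neg_ln_series:
  fixes p :: real
  assumes "0 \<le> p" "p < 1"
  shows "summable (\<lambda>n. p^(Suc n) / real (Suc n))" "- ln (1 - p) = (\<Sum>n. p^(Suc n) / real (Suc n))"
proof -
  show sm: "summable (\<lambda>n. p^(Suc n) / real (Suc n))"
  proof (rule summable_comparison_test')
    show "summable (\<lambda>n. p * p^n)" using assms by (intro summable_mult summable_geometric) auto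
    fix n :: nat
    have "p^(Suc n) / real (Suc n) \<le> p^(Suc n) / 1"
      by (intro divide_left_mono) (use assms in auto)
    then show "norm (p^(Suc n) / real (Suc n)) \<le> p * p^n"
      using assms by simp
  qed
  have "ln (1 - p) = (\<Sum>n. (-1)^n * (1 / real (n + 1)) * ((1 - p) - 1)^(Suc n))"
    using assms by (intro ln_series) auto
  also have "\<dots> = (\<Sum>n. - (p^(Suc n) / real (Suc n)))"
  proof (rule arg_cong[where f=suminf], rule ext)
    fix n :: nat
    have "((1 - p) - 1)^(Suc n) = (-1)^(Suc n) * p^(Suc n)"
      by (simp add: power_mult_distrib[symmetric])
    moreover have "(-1::real)^n * (-1)^(Suc n) = -1"
      by (simp add: power_add[symmetric])
    ultimately have e: "(-1::real)^n * ((1 - p) - 1)^(Suc n) = - (p^(Suc n))"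
      by (metis mult.assoc mult_minus1)
    have "(-1)^n * (1 / real (n + 1)) * ((1 - p) - 1)^(Suc n) = ((-1)^n * ((1 - p) - 1)^(Suc n)) / real (Suc n)"
      by simp
    then show "(-1)^n * (1 / real (n + 1)) * ((1 - p) - 1)^(Suc n) = - (p^(Suc n) / real (Suc n))"
      unfolding e by simp
  qed
  also have "\<dots> = - (\<Sum>n. p^(Suc n) / real (Suc n))" using sm by (rule suminf_minus)
  finally show "- ln (1 - p) = (\<Sum>n. p^(Suc n) / real (Suc n))" by simp
qed

lemma partial_log:
  fixes p :: real
  assumes "0 \<le> p" "p < 1"
  shows "(\<Sum>m<M. p^m / real (Suc m)) \<le> 2 + 2 * \<bar>ln (1 - p)\<bar>"
proof (cases "p \<le> 1/2")
  case True
  have "(\<Sum>m<M. p^m / real (Suc m)) \<le> (\<Sum>m<M. (1/2::real)^m)"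
  proof (rule sum_mono)
    fix m :: nat
    have "p^m / real (Suc m) \<le> p^m" using assms by (simp add: divide_le_eq mult_le_cancel_left1)
    also have "\<dots> \<le> (1/2)^m" using assms True by (intro power_mono) auto
    finally show "p^m / real (Suc m) \<le> (1/2)^m" .
  qed
  also have "\<dots> = 2 * (1 - (1/2)^M)" by (simp add: sum_gp_strict)
  also have "\<dots> \<le> 2" by simp
  finally show ?thesis by simp
next
  case False
  have "p * (\<Sum>m<M. p^m / real (Suc m)) = (\<Sum>m<M. p^(Suc m) / real (Suc m))"
    by (simp add: sum_distrib_left)
  also have "\<dots> \<le> (\<Sum>n. p^(Suc n) / real (Suc n))"
    using assms by (intro sum_le_suminf neg_ln_series) auto
  also have "\<dots> = - ln (1 - p)" using neg_ln_series[OF assms] by simp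
  finally have h: "p * (\<Sum>m<M. p^m / real (Suc m)) \<le> - ln (1 - p)" .
  have nn: "0 \<le> (\<Sum>m<M. p^m / real (Suc m))" using assms by (intro sum_nonneg) auto
  have "(1/2) * (\<Sum>m<M. p^m / real (Suc m)) \<le> p * (\<Sum>m<M. p^m / real (Suc m))"
    using False nn by (intro mult_right_mono) auto
  with h have "(\<Sum>m<M. p^m / real (Suc m)) \<le> 2 * (- ln (1 - p))" by linarith
  then show ?thesis by linarith
qed

lemma qsum:
  fixes p :: real
  shows "(\<Sum>k\<le>n. (if 2 \<le> k then p^(k-2) / real (k-1) else 0)) = (\<Sum>m<n-1. p^m / real (Suc m))"
proof (induction n)
  case 0 then show ?case by simp
next
  case (Suc n)
  show ?case
  proof (cases "n = 0")
    case True then show ?thesis by simp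
  next
    case False
    then obtain j where j: "n = Suc j" by (cases n) auto
    show ?thesis using Suc j by simp
  qed
qed



context
  fixes \<Lambda> :: "real measure"
  assumes fin: "finite_measure \<Lambda>" and sts: "sets \<Lambda> = sets borel"
    and cpos: "measure \<Lambda> {0..1} > 0"
    and logm: "(\<integral>\<^sup>+ p\<in>{0..1}. (if p < 1 then ennreal \<bar>ln (1 - p)\<bar> else \<infinity>) \<partial>\<Lambda>) < \<infinity>"
begin

definition qq :: "nat \<Rightarrow> real \<Rightarrow> real" where
  "qq n p = (\<Sum>k\<le>n. (if 2 \<le> k then p^(k-2) / real (k-1) else 0))"

lemma qq_meas: "(\<lambda>p. qq n p) \<in> borel_measurable borel"
  unfolding qq_def by measurable

lemma aa_sum: "(\<Sum>k\<le>n. aa \<Lambda> k) = 2 / measure \<Lambda> {0..1} * (\<integral>p. indicator {0..1} p * qq n p \<partial>\<Lambda>)"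
proof -
  have each: "aa \<Lambda> k = 2 / measure \<Lambda> {0..1} * (\<integral>p. indicator {0..1} p * (if 2 \<le> k then p^(k-2) / real (k-1) else 0) \<partial>\<Lambda>)" for k
  proof (cases "2 \<le> k")
    case True
    have "lambda_rate \<Lambda> k k / real (k-1) = (\<integral>p. indicator {0..1} p * (p^(k-2) * (1-p)^(k-k)) \<partial>\<Lambda>) / real (k-1)"
      unfolding lambda_rate_eq[OF fin sts] ..
    also have "\<dots> = (\<integral>p. indicator {0..1} p * (p^(k-2) * (1-p)^(k-k)) / real (k-1) \<partial>\<Lambda>)" by simp
    also have "\<dots> = (\<integral>p. indicator {0..1} p * (if 2 \<le> k then p^(k-2) / real (k-1) else 0) \<partial>\<Lambda>)"
      using True by simp
    finally show ?thesis unfolding aa_def[OF fin sts cpos] using True by simp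
  next
    case False then show ?thesis unfolding aa_def[OF fin sts cpos] by simp
  qed
  have int: "integrable \<Lambda> (\<lambda>p. indicator {0..1} p * (if 2 \<le> k then p^(k-2) / real (k-1) else 0))" for k
  proof (rule integrable_I[OF fin sts, where B=1])
    show "(\<lambda>p::real. if 2 \<le> k then p^(k-2) / real (k-1) else 0) \<in> borel_measurable borel" by measurable
    fix p :: real assume p: "p \<in> {0..1}"
    show "\<bar>if 2 \<le> k then p^(k-2) / real (k-1) else 0\<bar> \<le> 1"
    proof (cases "2 \<le> k")
      case True
      have "p^(k-2) \<le> 1" using p by (intro power_le_one) auto
      moreover have "p^(k-2) / real (k-1) \<le> p^(k-2) / 1" using p True by (intro divide_left_mono) auto
      ultimately show ?thesis using p True by auto
    qed auto
  qed
  have "(\<Sum>k\<le>n. aa \<Lambda> k) = 2 / measure \<Lambda> {0..1} * (\<Sum>k\<le>n. (\<integral>p. indicator {0..1} p * (if 2 \<le> k then p^(k-2) / real (k-1) else 0) \<partial>\<Lambda>))"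
    unfolding each sum_distrib_left ..
  also have "(\<Sum>k\<le>n. (\<integral>p. indicator {0..1} p * (if 2 \<le> k then p^(k-2) / real (k-1) else 0) \<partial>\<Lambda>))
      = (\<integral>p. (\<Sum>k\<le>n. indicator {0..1} p * (if 2 \<le> k then p^(k-2) / real (k-1) else 0)) \<partial>\<Lambda>)"
    by (rule Bochner_Integration.integral_sum[symmetric]) (rule int)
  also have "\<dots> = (\<integral>p. indicator {0..1} p * qq n p \<partial>\<Lambda>)"
    unfolding qq_def sum_distrib_left ..
  finally show ?thesis .
qed

definition HH :: "real \<Rightarrow> ennreal" where
  "HH p = (if p < 1 then ennreal \<bar>ln (1 - p)\<bar> else \<infinity>)"

lemma bound_finite: "(\<integral>\<^sup>+p. (2 + 2 * HH p) * indicator {0..1} p \<partial>\<Lambda>) < \<infinity>"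
proof -
  have m1 [measurable]: "(\<lambda>p. HH p * indicator {0..1} p) \<in> borel_measurable \<Lambda>"
    unfolding measurable_cong_sets[OF sts refl] HH_def by measurable
  have m2 [measurable]: "(\<lambda>p. indicator {0..1} p :: ennreal) \<in> borel_measurable \<Lambda>"
    unfolding measurable_cong_sets[OF sts refl] by measurable
  have "(\<integral>\<^sup>+p. (2 + 2 * HH p) * indicator {0..1} p \<partial>\<Lambda>)
      = (\<integral>\<^sup>+p. 2 * indicator {0..1} p + 2 * (HH p * indicator {0..1} p) \<partial>\<Lambda>)"
    by (intro nn_integral_cong) (simp add: distrib_right mult.assoc)
  also have "\<dots> = (\<integral>\<^sup>+p. 2 * indicator {0..1} p \<partial>\<Lambda>) + (\<integral>\<^sup>+p. 2 * (HH p * indicator {0..1} p) \<partial>\<Lambda>)"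
    by (rule nn_integral_add) auto
  also have "\<dots> = 2 * emeasure \<Lambda> {0..1} + 2 * (\<integral>\<^sup>+p. HH p * indicator {0..1} p \<partial>\<Lambda>)"
    using sts by (simp add: nn_integral_cmult)
  also have "\<dots> < \<infinity>"
  proof -
    have "emeasure \<Lambda> {0..1} < \<infinity>" using fin finite_measure.emeasure_finite by (auto simp: top.not_eq_extremum)
    moreover have "(\<integral>\<^sup>+p. HH p * indicator {0..1} p \<partial>\<Lambda>) < \<infinity>" using logm unfolding HH_def by simp
    ultimately show ?thesis by (simp add: ennreal_mult_less_top)
  qed
  finally show ?thesis .
qed

lemma qq_bound:
  assumes "0 \<le> p" "p < 1"
  shows "qq n p \<le> 2 + 2 * \<bar>ln (1 - p)\<bar>"
  unfolding qq_def qsum using partial_log[OF assms] .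

lemma aa_summable: "summable (aa \<Lambda>)"
proof (rule bounded_imp_summable)
  show "\<And>n. 0 \<le> aa \<Lambda> n" using aa_nonneg[OF fin sts cpos] .
  fix n
  define B where "B = enn2real (\<integral>\<^sup>+p. (2 + 2 * HH p) * indicator {0..1} p \<partial>\<Lambda>)"
  have qnn: "0 \<le> qq n p" if "0 \<le> p" for p using that unfolding qq_def by (intro sum_nonneg) auto
  have "(\<integral>p. indicator {0..1} p * qq n p \<partial>\<Lambda>) = enn2real (\<integral>\<^sup>+p. ennreal (indicator {0..1} p * qq n p) \<partial>\<Lambda>)"
    by (intro integral_eq_nn_integral meas_I[OF fin sts] qq_meas AE_I2) (auto simp: indicator_def qnn)
  also have "\<dots> \<le> B"
    unfolding B_def
  proof (rule enn2real_mono)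
    show "(\<integral>\<^sup>+p. (2 + 2 * HH p) * indicator {0..1} p \<partial>\<Lambda>) < top" using bound_finite by simp
    show "(\<integral>\<^sup>+p. ennreal (indicator {0..1} p * qq n p) \<partial>\<Lambda>) \<le> (\<integral>\<^sup>+p. (2 + 2 * HH p) * indicator {0..1} p \<partial>\<Lambda>)"
    proof (rule nn_integral_mono)
    fix p :: real
    show "ennreal (indicator {0..1} p * qq n p) \<le> (2 + 2 * HH p) * indicator {0..1} p"
    proof (cases "p \<in> {0..1}")
      case True
      show ?thesis
      proof (cases "p < 1")
        case True2: True
        have "qq n p \<le> 2 + 2 * \<bar>ln (1 - p)\<bar>" using qq_bound True True2 by auto
        then have "ennreal (qq n p) \<le> ennreal (2 + 2 * \<bar>ln (1 - p)\<bar>)" by (rule ennreal_leI)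
        also have "\<dots> = 2 + 2 * ennreal \<bar>ln (1 - p)\<bar>"
          by (simp add: ennreal_plus ennreal_mult)
        finally show ?thesis using True True2 unfolding HH_def by simp
      next
        case False
        then show ?thesis using True unfolding HH_def by simp
      qed
    next
      case False then show ?thesis by simp
    qed
    qed
  qed
  finally have i: "(\<integral>p. indicator {0..1} p * qq n p \<partial>\<Lambda>) \<le> B" .
  have "(\<Sum>k\<le>n. aa \<Lambda> k) \<le> 2 / measure \<Lambda> {0..1} * B"
    unfolding aa_sum using i cpos by (intro mult_left_mono) auto
  then show "(\<Sum>k\<le>n. aa \<Lambda> k) \<le> 2 / measure \<Lambda> {0..1} * B" .
qed

end


theorem theorem1:
  fixes \<Lambda> :: "real measure"
  assumes "finite_measure \<Lambda>"
    and "sets \<Lambda> = sets borel"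
    and "emeasure \<Lambda> (UNIV - {0..1}) = 0"
    and "emeasure \<Lambda> {0..1} \<noteq> 0"
    and "(\<integral>\<^sup>+ p\<in>{0..1}. (if p < 1 then ennreal \<bar>ln (1 - p)\<bar> else \<infinity>) \<partial>\<Lambda>) < \<infinity>"
  shows "\<forall>\<epsilon>>0. \<exists>K::nat. \<forall>n\<ge>1. measure_pmf.prob (L_law \<Lambda> n) {K<..} \<le> \<epsilon>"
proof (intro allI impI)
  fix \<epsilon> :: real assume eps: "\<epsilon> > 0"
  note fin = assms(1) and sts = assms(2)
  have cpos: "measure \<Lambda> {0..1} > 0"
  proof -
    have "{0..1::real} \<in> sets \<Lambda>" using sts by simp
    then have "emeasure \<Lambda> {0..1} = ennreal (measure \<Lambda> {0..1})"
      using finite_measure.emeasure_eq_measure[OF fin] by blast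
    then show ?thesis using assms(4) measure_nonneg[of \<Lambda> "{0..1}"] by (auto simp: less_le)
  qed
  have sm: "summable (aa \<Lambda>)" using aa_summable[OF fin sts cpos assms(5)] .
  have nn: "\<And>k. 0 \<le> aa \<Lambda> k" using aa_nonneg[OF fin sts cpos] .
  have "(\<lambda>n. \<Sum>i<n. aa \<Lambda> i) \<longlonglongrightarrow> suminf (aa \<Lambda>)" using sm by (rule summable_LIMSEQ)
  then obtain N where N: "\<And>n. n \<ge> N \<Longrightarrow> dist (\<Sum>i<n. aa \<Lambda> i) (suminf (aa \<Lambda>)) < \<epsilon>"
    using eps by (auto simp: lim_sequentially)
  define K where "K = N + 1"
  have K1: "1 \<le> K" unfolding K_def by simp
  have tail: "suminf (aa \<Lambda>) - (\<Sum>i<K+1. aa \<Lambda> i) \<le> \<epsilon>"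
    using N[of "K+1"] unfolding K_def by (auto simp: dist_real_def)
  have FFb: "FF \<Lambda> K m \<le> \<epsilon>" for m
  proof (cases "m \<le> K")
    case True
    then have "FF \<Lambda> K m = 0" unfolding FF_def[OF fin sts cpos] by simp
    moreover have "(\<Sum>i<K+1. aa \<Lambda> i) \<le> suminf (aa \<Lambda>)"
      using sm nn by (intro sum_le_suminf) auto
    ultimately show ?thesis using tail by linarith
  next
    case False
    have un: "{..<m+1} = {..<K+1} \<union> {K<..m}" using False by auto
    have "(\<Sum>i<m+1. aa \<Lambda> i) = (\<Sum>i<K+1. aa \<Lambda> i) + FF \<Lambda> K m"
      unfolding FF_def[OF fin sts cpos] un by (rule sum.union_disjoint) auto
    moreover have "(\<Sum>i<m+1. aa \<Lambda> i) \<le> suminf (aa \<Lambda>)"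
      using sm nn by (intro sum_le_suminf) auto
    ultimately show ?thesis using tail by linarith
  qed
  show "\<exists>K::nat. \<forall>n\<ge>1. measure_pmf.prob (L_law \<Lambda> n) {K<..} \<le> \<epsilon>"
  proof (intro exI[of _ "2*K"] allI impI)
    fix n :: nat assume "n \<ge> 1"
    define P0 where "P0 = {{i} | i. i \<in> {1..n}}"
    have P0eq: "P0 = (\<lambda>i. {i}) ` {1..n}" unfolding P0_def by auto
    have finP0: "finite P0" unfolding P0eq by simp
    have cP0: "card P0 \<le> n" unfolding P0eq using card_image_le[of "{1..n}" "\<lambda>i. {i}"] by simp
    have "measure_pmf.prob (L_law \<Lambda> n) {2*K<..} = measure_pmf.prob (last_merger_aux \<Lambda> n P0) {2*K<..}"
      unfolding L_law_def P0_def ..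
    also have "\<dots> \<le> FF \<Lambda> K (card P0)" by (rule main_ind[OF fin sts cpos K1 finP0 cP0])
    also have "\<dots> \<le> \<epsilon>" by (rule FFb)
    finally show "measure_pmf.prob (L_law \<Lambda> n) {2*K<..} \<le> \<epsilon>" .
  qed
qed


end
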